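(* Let $\mathbb{Y}$ be the open mono-dynamics with motor the monoid $(\mathbf{R}_+,+)$ (single object $\bullet$), clock $\bullet^{\mathbf h}=\mathbf{R}_+$ with $d^{\mathbf h}(t)=t+d$, state set $\mathbf{R}_+\times\mathbf{R}$, scansion $\tau(t,a)=t$ and transitions $d^{\mathbb{Y}}(t,a)=\{t+d\}\times[a-d,a+d]$ for $d\in\mathbf R_+$. Then the map sending a function $y\in Lip^1_+$ to the partial function $\mathfrak a_y:t\mapsto(t,y(t))$ on $D_y$ is a bijection from $Lip^1_+$ onto the set $\mathcal S_{\mathbb Y}$ of external parts of realizations of $\mathbb Y$ (the empty function corresponding to the empty realization). In particular $\mathcal S^*_{\mathbb Y}\simeq Lip^1_+\setminus\{\emptyset\}$.
   Context: For an interval $K\subset\mathbf R$, $Lip^1(K)$ is the set of $1$-Lipschitz real functions on $K$. For $c\in[0,+\infty]$, $Lip^1([0,c|)=Lip^1([0,c])\cup Lip^1([0,c[)$ (for $c=+\infty$ this is $Lip^1([0,+\infty[)$; for $c=0$ it is $Lip^1(\{0\})\cup\{\emptyset\}$), and $Lip^1_+=\bigcup_{c\in[0,+\infty]}Lip^1([0,c|)$. A realization of an open mono-dynamics $(\tau:\alpha\looparrowright\mathbf h)$ with one-object motor is a partial function $\mathfrak a$ from $st(\mathbf h)$ to the states, with domain $D$, such that $\tau(\mathfrak a(t))=t$ for $t\in D$, and for every arrow $d$ and instant $t$: if $d^{\mathbf h}(t)\in D$ then $t\in D$ and $\mathfrak a(d^{\mathbf h}(t))\in d^\alpha(\mathfrak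 a(t))$. The empty realization is the empty partial function. *)

theory Defs
  imports "HOL-Analysis.Analysis"
begin

definition Lip1_on :: "real set \<Rightarrow> (real \<Rightarrow> real) \<Rightarrow> bool" where
  "Lip1_on K f \<longleftrightarrow> (\<forall>x\<in>K. \<forall>y\<in>K. \<bar>f x - f y\<bar> \<le> \<bar>x - y\<bar>)"

definition Lip1_plus :: "(real \<Rightarrow> real option) set" where
  "Lip1_plus = {y. ((\<exists>c::real. c \<ge> 0 \<and> (dom y = {0..c} \<or> dom y = {0..<c})) \<or> dom y = {0..})
                   \<and> Lip1_on (dom y) (\<lambda>t. the (y t))}"

definition Y_clock :: "real \<Rightarrow> real \<Rightarrow> real" where
  "Y_clock d t = t + d"

definition Y_states :: "(real \<times> real) set" where
  "Y_states = {0..} \<times> UNIV"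

definition Y_tau :: "real \<times> real \<Rightarrow> real" where
  "Y_tau s = fst s"

definition Y_trans :: "real \<Rightarrow> real \<times> real \<Rightarrow> (real \<times> real) set" where
  "Y_trans d s = {fst s + d} \<times> {snd s - d .. snd s + d}"

definition Y_realization :: "(real \<Rightarrow> (real \<times> real) option) \<Rightarrow> bool" where
  "Y_realization a \<longleftrightarrow>
     dom a \<subseteq> {0..} \<and> ran a \<subseteq> Y_states \<and>
     (\<forall>t\<in>dom a. Y_tau (the (a t)) = t) \<and>
     (\<forall>d::real. d \<ge> 0 \<longrightarrow> (\<forall>t::real. t \<ge> 0 \<longrightarrow> Y_clock d t \<in> dom a \<longrightarrow>
        t \<in> dom a \<and> the (a (Y_clock d t)) \<in> Y_trans d (the (a t))))"

definition realization_of :: "(real \<Rightarrow> real option) \<Rightarrow> (real \<Rightarrow> (real \<times> real) option)" where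
  "realization_of y = (\<lambda>t. map_option (\<lambda>v. (t, v)) (y t))"

end

theory Submission
  imports Defs
begin

lemma downclosed_class:
  fixes S :: "real set"
  assumes sub: "S \<subseteq> {0..}" and dc: "\<And>t d. t \<ge> 0 \<Longrightarrow> d \<ge> 0 \<Longrightarrow> t + d \<in> S \<Longrightarrow> t \<in> S"
  shows "(\<exists>c::real. c \<ge> 0 \<and> (S = {0..c} \<or> S = {0..<c})) \<or> S = {0..}"
proof (cases "S = {}")
  case True
  then show ?thesis by (intro disjI1 exI[of _ 0]) auto
next
  case ne: False
  have below: "t \<in> S" if "t \<ge> 0" "s \<in> S" "t \<le> s" for t s
    using dc[of t "s - t"] that by auto
  show ?thesis
  proof (cases "bdd_above S")
    case False
    have "S = {0..}"
    proof
      show "{0..} \<subseteq> S"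
      proof
        fix t :: real assume "t \<in> {0..}"
        from False obtain s where "s \<in> S" "s > t" unfolding bdd_above_def
          by (meson not_le)
        then show "t \<in> S" using below \<open>t \<in> {0..}\<close> by auto
      qed
    qed (use sub in auto)
    then show ?thesis by blast
  next
    case True
    define c where "c = Sup S"
    from ne obtain s0 where s0: "s0 \<in> S" by auto
    have up: "s \<le> c" if "s \<in> S" for s using cSup_upper[OF that True] c_def by simp
    have c0: "c \<ge> 0" using up[OF s0] sub s0 by auto
    have lo: "t \<in> S" if "0 \<le> t" "t < c" for t
    proof -
      from that have "t < Sup S" using c_def by simp
      then obtain s where "s \<in> S" "t < s" using less_cSup_iff[OF ne True] by auto
      then show ?thesis using below that by auto
    qed
    show ?thesis
    proof (cases "c \<in> S")
      case True
      have "S = {0..c}"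
      proof
        show "S \<subseteq> {0..c}" using sub up by auto
        show "{0..c} \<subseteq> S"
        proof
          fix t assume "t \<in> {0..c}"
          then have "0 \<le> t" "t \<le> c" by auto
          then show "t \<in> S" using lo True by (cases "t = c") auto
        qed
      qed
      then show ?thesis using c0 by blast
    next
      case False
      have "S = {0..<c}"
      proof
        show "S \<subseteq> {0..<c}"
        proof
          fix t assume t: "t \<in> S"
          then have "t \<le> c" "t \<noteq> c" "0 \<le> t" using up False sub by auto
          then show "t \<in> {0..<c}" by auto
        qed
        show "{0..<c} \<subseteq> S" using lo by auto
      qed
      then show ?thesis using c0 by blast
    qed
  qed
qed

lemma inj_real: "inj realization_of"
proof (rule injI)
  fix y z assume h: "realization_of y = realization_of z"
  show "y = z"
  proof
    fix t
    from h have "map_option (\<lambda>v. (t, v)) (y t) = map_option (\<lambda>v. (t, v)) (z t)"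
      unfolding realization_of_def by meson
    then show "y t = z t" by (cases "y t"; cases "z t") auto
  qed
qed

lemma dom_real: "dom (realization_of y) = dom y"
  unfolding realization_of_def dom_def by auto

lemma real_is_Y:
  assumes "y \<in> Lip1_plus"
  shows "Y_realization (realization_of y)"
proof -
  from assms have D: "((\<exists>c::real. c \<ge> 0 \<and> (dom y = {0..c} \<or> dom y = {0..<c})) \<or> dom y = {0..})"
    and L: "Lip1_on (dom y) (\<lambda>t. the (y t))" unfolding Lip1_plus_def by auto
  have dsub: "dom y \<subseteq> {0..}" using D by auto
  have dc: "t \<in> dom y" if "t \<ge> 0" "d \<ge> 0" "t + d \<in> dom y" for t d
  proof -
    have "t \<le> t + d" using that by simp
    show ?thesis using D
    proof (elim disjE)
      assume "\<exists>c\<ge>0. dom y = {0..c} \<or> dom y = {0..<c}"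
      then obtain c where "dom y = {0..c} \<or> dom y = {0..<c}" by blast
      then show ?thesis
      proof
        assume h: "dom y = {0..c}"
        have "t + d \<le> c" using that(3) unfolding h by simp
        then have "t \<in> {0..c}" using that by simp
        then show ?thesis unfolding h .
      next
        assume h: "dom y = {0..<c}"
        have "t + d < c" using that(3) unfolding h by simp
        then have "t \<in> {0..<c}" using that by simp
        then show ?thesis unfolding h .
      qed
    next
      assume h: "dom y = {0..}" have "t \<in> {0..}" using that by simp
      then show ?thesis unfolding h .
    qed
  qed
  show ?thesis unfolding Y_realization_def
  proof (intro conjI ballI allI impI)
    show "dom (realization_of y) \<subseteq> {0..}" using dsub dom_real by simp
    show "ran (realization_of y) \<subseteq> Y_states"
      using dsub unfolding ran_def Y_states_def realization_of_def dom_def by auto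
    show "Y_tau (the (realization_of y t)) = t" if "t \<in> dom (realization_of y)" for t
      using that unfolding Y_tau_def realization_of_def dom_def by auto
    fix d t :: real assume d: "d \<ge> 0" and t: "t \<ge> 0" and "Y_clock d t \<in> dom (realization_of y)"
    then have td: "t + d \<in> dom y" using dom_real unfolding Y_clock_def by simp
    then have tin: "t \<in> dom y" using dc d t by blast
    then show "t \<in> dom (realization_of y)" using dom_real by simp
    have "\<bar>the (y (t+d)) - the (y t)\<bar> \<le> \<bar>(t+d) - t\<bar>" using L td tin unfolding Lip1_on_def by blast
    then have "\<bar>the (y (t+d)) - the (y t)\<bar> \<le> d" using d by simp
    then show "the (realization_of y (Y_clock d t)) \<in> Y_trans d (the (realization_of y t))"
      using td tin unfolding Y_trans_def Y_clock_def realization_of_def dom_def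
      by (auto simp: abs_le_iff)
  qed
qed

lemma Y_is_real:
  assumes "Y_realization a"
  shows "a \<in> realization_of ` Lip1_plus"
proof -
  define y where "y = (\<lambda>t. map_option snd (a t))"
  from assms have dsub: "dom a \<subseteq> {0..}" and tau: "\<forall>t\<in>dom a. Y_tau (the (a t)) = t"
    and tr: "\<forall>d::real. d \<ge> 0 \<longrightarrow> (\<forall>t::real. t \<ge> 0 \<longrightarrow> Y_clock d t \<in> dom a \<longrightarrow>
        t \<in> dom a \<and> the (a (Y_clock d t)) \<in> Y_trans d (the (a t)))"
    unfolding Y_realization_def by auto
  have domy: "dom y = dom a" unfolding y_def dom_def by auto
  have ay: "realization_of y = a"
  proof
    fix t show "realization_of y t = a t"
    proof (cases "a t")
      case None then show ?thesis unfolding realization_of_def y_def by simp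
    next
      case (Some p)
      then have "t \<in> dom a" by auto
      then have "Y_tau (the (a t)) = t" using tau by blast
      then have "fst p = t" using Some unfolding Y_tau_def by simp
      then show ?thesis using Some unfolding realization_of_def y_def by (cases p) auto
    qed
  qed
  have dc: "t \<in> dom a" if "t \<ge> 0" "d \<ge> 0" "t + d \<in> dom a" for t d
  proof -
    have "Y_clock d t \<in> dom a" using that unfolding Y_clock_def by simp
    then show ?thesis using tr that by blast
  qed
  have D: "(\<exists>c::real. c \<ge> 0 \<and> (dom y = {0..c} \<or> dom y = {0..<c})) \<or> dom y = {0..}"
    using downclosed_class[OF dsub dc] domy by simp
  have lipd: "\<bar>the (y (t+d)) - the (y t)\<bar> \<le> d" if "t \<ge> 0" "d \<ge> 0" "t + d \<in> dom a" for t d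
  proof -
    have "Y_clock d t \<in> dom a" using that unfolding Y_clock_def by simp
    then have "the (a (Y_clock d t)) \<in> Y_trans d (the (a t))" using tr that by blast
    then have m: "the (a (t+d)) \<in> Y_trans d (the (a t))" unfolding Y_clock_def .
    have "t \<in> dom a" using dc that by blast
    then obtain p where p: "a t = Some p" by auto
    from that(3) obtain q where q: "a (t+d) = Some q" by auto
    from m have "snd q \<ge> snd p - d" "snd q \<le> snd p + d"
      unfolding Y_trans_def p q by auto
    then show ?thesis unfolding y_def p q by (simp add: abs_le_iff)
  qed
  have L: "Lip1_on (dom y) (\<lambda>t. the (y t))"
    unfolding Lip1_on_def
  proof (intro ballI)
    fix u v assume u: "u \<in> dom y" and v: "v \<in> dom y"
    show "\<bar>the (y u) - the (y v)\<bar> \<le> \<bar>u - v\<bar>"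
    proof (cases "u \<le> v")
      case True
      have "\<bar>the (y (u + (v-u))) - the (y u)\<bar> \<le> v - u"
        using lipd[of u "v-u"] True u v dsub domy by auto
      then show ?thesis using True by (simp add: abs_minus_commute)
    next
      case False
      have "\<bar>the (y (v + (u-v))) - the (y v)\<bar> \<le> u - v"
        using lipd[of v "u-v"] False u v dsub domy by auto
      then show ?thesis using False by simp
    qed
  qed
  have "y \<in> Lip1_plus" using D L unfolding Lip1_plus_def by blast
  then show ?thesis using ay by blast
qed

lemma img: "realization_of ` Lip1_plus = {a. Y_realization a}"
  using real_is_Y Y_is_real by blast

lemma emp: "realization_of Map.empty = Map.empty"
  unfolding realization_of_def by simp

theorem mainTheorem6:
  shows "bij_betw realization_of Lip1_plus {a. Y_realization a}
       \<and> realization_of Map.empty = Map.empty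
       \<and> bij_betw realization_of (Lip1_plus - {Map.empty}) {a. Y_realization a \<and> a \<noteq> Map.empty}"
proof (intro conjI)
  show "bij_betw realization_of Lip1_plus {a. Y_realization a}"
    unfolding bij_betw_def using inj_real img by (auto intro: inj_on_subset)
  show "realization_of Map.empty = Map.empty" by (rule emp)
  have "realization_of ` (Lip1_plus - {Map.empty}) = realization_of ` Lip1_plus - {realization_of Map.empty}"
    using inj_real by (simp add: image_set_diff)
  then have "realization_of ` (Lip1_plus - {Map.empty}) = {a. Y_realization a \<and> a \<noteq> Map.empty}"
    using img emp by auto
  then show "bij_betw realization_of (Lip1_plus - {Map.empty}) {a. Y_realization a \<and> a \<noteq> Map.empty}"
    unfolding bij_betw_def using inj_real by (auto intro: inj_on_subset)
qed

end
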